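(* There exists a context-free language $L$ such that $L \leftarrow L$ is not context-free.
   Context: Outfix-guided insertion: $x \leftarrow y = \{ x_1 u z v x_2 \mid x = x_1 u v x_2,\ y = u z v,\ u \neq \varepsilon,\ v \neq \varepsilon \}$; for languages, $L_1 \leftarrow L_2 = \bigcup_{x \in L_1, y \in L_2} x \leftarrow y$. *)

theory Defs
  imports Main
begin

text \<open>A production (A, alpha) rewrites nonterminal A into the sentential form alpha,
  where Inl B denotes nonterminal B and Inr a denotes terminal a.\<close>

type_synonym 'a cfg_prods = "(nat \<times> (nat + 'a) list) set"

definition derive1 :: "'a cfg_prods \<Rightarrow> (nat + 'a) list \<Rightarrow> (nat + 'a) list \<Rightarrow> bool" where
  "derive1 P u v \<longleftrightarrow> (\<exists>l A r alpha. u = l @ [Inl A] @ r \<and> (A, alpha) \<in> P \<and> v = l @ alpha @ r)"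

definition cfg_lang :: "'a cfg_prods \<Rightarrow> nat \<Rightarrow> 'a list set" where
  "cfg_lang P S = {w. (derive1 P)\<^sup>*\<^sup>* [Inl S] (map Inr w)}"

definition context_free :: "'a list set \<Rightarrow> bool" where
  "context_free L \<longleftrightarrow> (\<exists>P S. finite P \<and> L = cfg_lang P S)"

definition outfix_ins :: "'a list \<Rightarrow> 'a list \<Rightarrow> 'a list set" where
  "outfix_ins x y = {x1 @ u @ z @ v @ x2 | x1 u z v x2.
      x = x1 @ u @ v @ x2 \<and> y = u @ z @ v \<and> u \<noteq> [] \<and> v \<noteq> []}"

definition outfix_ins_lang :: "'a list set \<Rightarrow> 'a list set \<Rightarrow> 'a list set" where
  "outfix_ins_lang L1 L2 = (\<Union>x\<in>L1. \<Union>y\<in>L2. outfix_ins x y)"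

end

theory Submission
  imports Defs
begin


datatype 'a ptree = Lf "nat + 'a" | Nd nat "'a ptree list"

fun root :: "'a ptree \<Rightarrow> nat + 'a" where
  "root (Lf s) = s" | "root (Nd A ts) = Inl A"
fun fringe :: "'a ptree \<Rightarrow> (nat + 'a) list" where
  "fringe (Lf s) = [s]" | "fringe (Nd A ts) = concat (map fringe ts)"
fun valid :: "'a cfg_prods \<Rightarrow> 'a ptree \<Rightarrow> bool" where
  "valid P (Lf s) = True"
| "valid P (Nd A ts) = ((A, map root ts) \<in> P \<and> (\<forall>t\<in>set ts. valid P t))"
fun tsize :: "'a ptree \<Rightarrow> nat" where
  "tsize (Lf s) = 1" | "tsize (Nd A ts) = Suc (sum_list (map tsize ts))"
fun height :: "'a ptree \<Rightarrow> nat" where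
  "height (Lf s) = 0" | "height (Nd A ts) = Suc (Max (insert 0 (height ` set ts)))"
fun nts :: "'a ptree \<Rightarrow> nat set" where
  "nts (Lf s) = {}" | "nts (Nd A ts) = insert A (\<Union>t\<in>set ts. nts t)"
fun rf :: "'a ptree \<Rightarrow> bool" where
  "rf (Lf s) = True" | "rf (Nd A ts) = (\<forall>t\<in>set ts. rf t \<and> A \<notin> nts t)"

inductive sub :: "'a ptree \<Rightarrow> 'a ptree \<Rightarrow> bool" where
  sub_refl: "sub t t"
| sub_step: "sub s c \<Longrightarrow> c \<in> set ts \<Longrightarrow> sub s (Nd A ts)"

lemma derive1_ctx: "derive1 P a b \<Longrightarrow> derive1 P (l @ a @ r) (l @ b @ r)"
  unfolding derive1_def by (metis append.assoc)

lemma derives_ctx: "(derive1 P)\<^sup>*\<^sup>* a b \<Longrightarrow> (derive1 P)\<^sup>*\<^sup>* (l @ a @ r) (l @ b @ r)"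
  by (induction rule: rtranclp_induct) (auto intro: rtranclp.rtrancl_into_rtrancl derive1_ctx)

lemma derives_forest:
  "(\<forall>t\<in>set ts. (derive1 P)\<^sup>*\<^sup>* [root t] (fringe t)) \<Longrightarrow>
   (derive1 P)\<^sup>*\<^sup>* (map root ts) (concat (map fringe ts))"
proof (induction ts)
  case Nil then show ?case by simp
next
  case (Cons t ts)
  have 1: "(derive1 P)\<^sup>*\<^sup>* ([] @ [root t] @ map root ts) ([] @ fringe t @ map root ts)"
    using Cons.prems by (intro derives_ctx) auto
  have 2: "(derive1 P)\<^sup>*\<^sup>* (fringe t @ map root ts @ []) (fringe t @ concat (map fringe ts) @ [])"
    using Cons by (intro derives_ctx) auto
  from 1 2 show ?case by auto
qed

lemma sound: "valid P t \<Longrightarrow> (derive1 P)\<^sup>*\<^sup>* [root t] (fringe t)"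
proof (induction t)
  case (Lf s) then show ?case by simp
next
  case (Nd A ts)
  have "derive1 P [Inl A] (map root ts)"
    using Nd.prems unfolding derive1_def by (auto intro!: exI[of _ "[]"])
  moreover have "(derive1 P)\<^sup>*\<^sup>* (map root ts) (concat (map fringe ts))"
    using Nd by (intro derives_forest) auto
  ultimately show ?case by auto
qed

lemma complete_forest:
  "(derive1 P)\<^sup>*\<^sup>* a b \<Longrightarrow> \<exists>ts. (\<forall>t\<in>set ts. valid P t) \<and> map root ts = a \<and> concat (map fringe ts) = b"
proof (induction rule: converse_rtranclp_induct)
  case base
  show ?case by (rule exI[of _ "map Lf b"]) (induction b, auto)
next
  case (step a a')
  then obtain ts where ts: "\<forall>t\<in>set ts. valid P t" "map root ts = a'" "concat (map fringe ts) = b" by blast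
  from step(1) obtain l A r alpha where d: "a = l @ [Inl A] @ r" "(A, alpha) \<in> P" "a' = l @ alpha @ r"
    unfolding derive1_def by blast
  from ts(2) d(3) obtain ts1 ts2 ts3 where s: "ts = ts1 @ ts2 @ ts3" "map root ts1 = l"
    "map root ts2 = alpha" "map root ts3 = r"
  proof -
    from ts(2) d(3) obtain us vs where "ts = us @ vs" "map root us = l" "map root vs = alpha @ r"
      by (metis map_eq_append_conv)
    moreover from this(3) obtain ws xs where "vs = ws @ xs" "map root ws = alpha" "map root xs = r"
      by (metis map_eq_append_conv)
    ultimately show ?thesis using that by blast
  qed
  have v: "\<forall>t\<in>set (ts1 @ [Nd A ts2] @ ts3). valid P t" using ts(1) s(1,3) d(2) by auto
  have r: "map root (ts1 @ [Nd A ts2] @ ts3) = a" using s(2,4) d(1) by simp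
  have f: "concat (map fringe (ts1 @ [Nd A ts2] @ ts3)) = b" using ts(3) s(1) by simp
  show ?case using v r f by blast
qed

lemma lang_tree: "w \<in> cfg_lang P S \<longleftrightarrow> (\<exists>t. valid P t \<and> root t = Inl S \<and> fringe t = map Inr w)"
proof (rule iffI)
  assume "w \<in> cfg_lang P S"
  then have "(derive1 P)\<^sup>*\<^sup>* [Inl S] (map Inr w)" unfolding cfg_lang_def by simp
  note complete_forest[OF this]
  then obtain ts where ts: "\<forall>t\<in>set ts. valid P t" "map root ts = [Inl S]" "concat (map fringe ts) = map Inr w"
    by (elim exE conjE)
  from ts(2) obtain t where t: "ts = [t]" "root t = Inl S" by (auto simp: map_eq_Cons_conv)
  have "valid P t \<and> root t = Inl S \<and> fringe t = map Inr w" using ts t by simp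
  then show "\<exists>t. valid P t \<and> root t = Inl S \<and> fringe t = map Inr w" by (rule exI)
next
  assume "\<exists>t. valid P t \<and> root t = Inl S \<and> fringe t = map Inr w"
  then obtain t where t: "valid P t" "root t = Inl S" "fringe t = map Inr w" by (elim exE conjE)
  have "(derive1 P)\<^sup>*\<^sup>* [root t] (fringe t)" using sound[OF t(1)] .
  then have "(derive1 P)\<^sup>*\<^sup>* [Inl S] (map Inr w)" using t by simp
  then show "w \<in> cfg_lang P S" unfolding cfg_lang_def by simp
qed

lemma sub_replace:
  assumes "sub s t" "valid P t"
  shows "\<exists>l r. fringe t = l @ fringe s @ r \<and> valid P s \<and>
    (\<forall>s'. valid P s' \<and> root s' = root s \<longrightarrow>
      (\<exists>t'. valid P t' \<and> root t' = root t \<and> fringe t' = l @ fringe s' @ r \<and>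
            tsize t' + tsize s = tsize t + tsize s'))"
  using assms
proof (induction rule: sub.induct)
  case (sub_refl t)
  show ?case by (rule exI[of _ "[]"], rule exI[of _ "[]"]) (use sub_refl in auto)
next
  case (sub_step s c ts A)
  from sub_step.hyps(2) obtain ts1 ts2 where tsd: "ts = ts1 @ c # ts2" by (meson split_list)
  have vc: "valid P c" using sub_step.prems sub_step.hyps(2) by auto
  from sub_step.IH[OF vc] obtain l r where lr: "fringe c = l @ fringe s @ r" "valid P s"
    "\<forall>s'. valid P s' \<and> root s' = root s \<longrightarrow>
      (\<exists>t'. valid P t' \<and> root t' = root c \<and> fringe t' = l @ fringe s' @ r \<and>
            tsize t' + tsize s = tsize c + tsize s')" by blast
  show ?case
  proof (rule exI[of _ "concat (map fringe ts1) @ l"], rule exI[of _ "r @ concat (map fringe ts2)"],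
      intro conjI allI impI)
    show "fringe (Nd A ts) = (concat (map fringe ts1) @ l) @ fringe s @ r @ concat (map fringe ts2)"
      using lr tsd by simp
    show "valid P s" by fact
    fix s' assume s': "valid P s' \<and> root s' = root s"
    then obtain c' where c': "valid P c'" "root c' = root c" "fringe c' = l @ fringe s' @ r"
      "tsize c' + tsize s = tsize c + tsize s'" using lr(3) by blast
    show "\<exists>t'. valid P t' \<and> root t' = root (Nd A ts) \<and>
          fringe t' = (concat (map fringe ts1) @ l) @ fringe s' @ r @ concat (map fringe ts2) \<and>
          tsize t' + tsize s = tsize (Nd A ts) + tsize s'"
      by (rule exI[of _ "Nd A (ts1 @ c' # ts2)"]) (use c' sub_step.prems tsd in auto)
  qed
qed

lemma sub_valid: "sub s t \<Longrightarrow> valid P t \<Longrightarrow> valid P s"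
  by (induction rule: sub.induct) auto

lemma sub_size: "sub s t \<Longrightarrow> tsize s \<le> tsize t"
proof (induction rule: sub.induct)
  case (sub_step s c ts A)
  have "tsize c \<le> sum_list (map tsize ts)"
    using sub_step.hyps(2) by (simp add: member_le_sum_list)
  then show ?case using sub_step.IH by simp
qed simp

lemma nts_sub: "B \<in> nts c \<Longrightarrow> \<exists>ts'. sub (Nd B ts') c"
proof (induction c)
  case (Lf s) then show ?case by simp
next
  case (Nd A ts)
  show ?case
  proof (cases "B = A")
    case True then show ?thesis by (auto intro: sub_refl)
  next
    case False
    then obtain t where "t \<in> set ts" "B \<in> nts t" using Nd.prems by auto
    then show ?thesis using Nd.IH by (meson sub_step)
  qed
qed

lemma finite_nts: "finite (nts t)"
  by (induction t) auto

lemma nts_P: "valid P t \<Longrightarrow> nts t \<subseteq> fst ` P"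
  by (induction t) (auto simp: rev_image_eqI)

lemma rf_height: "rf t \<Longrightarrow> height t \<le> card (nts t)"
proof (induction t)
  case (Lf s) then show ?case by simp
next
  case (Nd A ts)
  show ?case
  proof (cases "ts = []")
    case True then show ?thesis by simp
  next
    case False
    have fin: "finite (insert 0 (height ` set ts))" by simp
    obtain h where h: "h \<in> insert 0 (height ` set ts)" "Max (insert 0 (height ` set ts)) = h"
      using Max_in[OF fin] by blast
    show ?thesis
    proof (cases "h = 0")
      case True
      have "finite (nts (Nd A ts))" by (rule finite_nts)
      moreover have "A \<in> nts (Nd A ts)" by simp
      ultimately have "card (nts (Nd A ts)) > 0" using card_gt_0_iff by blast
      then show ?thesis using h True by simp
    next
      case False
      then obtain t where t: "t \<in> set ts" "height t = h" using h by auto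
      have "height t \<le> card (nts t)" using Nd t by auto
      moreover have "A \<notin> nts t" using Nd.prems t by auto
      moreover have "card (insert A (nts t)) \<le> card (nts (Nd A ts))"
        using t by (intro card_mono) (auto simp: finite_nts)
      moreover have "card (insert A (nts t)) = Suc (card (nts t))"
        using calculation(2) finite_nts by (rule card_insert_disjoint[rotated])
      ultimately show ?thesis using h t by simp
    qed
  qed
qed

lemma concat_len_bound: "(\<forall>t\<in>set ts. length (f t) \<le> M) \<Longrightarrow> length (concat (map f ts)) \<le> length ts * M"
  by (induction ts) auto

lemma height_bound:
  assumes "\<forall>(A, al)\<in>P. length al \<le> m" "1 \<le> m"
  shows "valid P t \<Longrightarrow> length (fringe t) \<le> m ^ height t"
proof (induction t)
  case (Lf s) then show ?case by simp
next
  case (Nd A ts)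
  let ?H = "Max (insert 0 (height ` set ts))"
  have "\<forall>t\<in>set ts. length (fringe t) \<le> m ^ ?H"
  proof
    fix t assume t: "t \<in> set ts"
    then have "length (fringe t) \<le> m ^ height t" using Nd by auto
    also have "\<dots> \<le> m ^ ?H" using t assms(2) by (intro power_increasing) auto
    finally show "length (fringe t) \<le> m ^ ?H" .
  qed
  then have "length (fringe (Nd A ts)) \<le> length ts * m ^ ?H" using concat_len_bound by simp
  also have "\<dots> \<le> m * m ^ ?H"
    using Nd.prems assms(1) by (intro mult_right_mono) auto
  finally show ?case by simp
qed

lemma find_rep: "valid P t \<Longrightarrow> \<not> rf t \<Longrightarrow>
  \<exists>B ts. sub (Nd B ts) t \<and> (\<forall>c\<in>set ts. rf c) \<and> (\<exists>c\<in>set ts. B \<in> nts c)"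
proof (induction t)
  case (Lf s) then show ?case by simp
next
  case (Nd A ts)
  show ?case
  proof (cases "\<exists>c\<in>set ts. \<not> rf c")
    case True
    then obtain c where c: "c \<in> set ts" "\<not> rf c" by blast
    have "valid P c" using c Nd.prems by auto
    then have "\<exists>B ts'. sub (Nd B ts') c \<and> (\<forall>c\<in>set ts'. rf c) \<and> (\<exists>c\<in>set ts'. B \<in> nts c)"
      using Nd.IH c by blast
    then obtain B ts' where "sub (Nd B ts') c" "\<forall>c\<in>set ts'. rf c" "\<exists>c\<in>set ts'. B \<in> nts c"
      by blast
    then show ?thesis using c by (meson sub_step)
  next
    case False
    then have "\<forall>c\<in>set ts. rf c" by blast
    moreover have "\<exists>c\<in>set ts. A \<in> nts c" using Nd.prems(2) calculation by auto
    ultimately show ?thesis by (meson sub_refl)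
  qed
qed

definition pw :: "'b list \<Rightarrow> nat \<Rightarrow> 'b list" where "pw xs i = concat (replicate i xs)"

lemma pw_Suc1: "pw xs (Suc i) = xs @ pw xs i"
  unfolding pw_def by simp

lemma pw_Suc2: "pw xs (Suc i) = pw xs i @ xs"
  unfolding pw_def by (induction i) auto

lemma map_pw: "map f (pw xs i) = pw (map f xs) i"
  unfolding pw_def by (simp add: map_concat)

lemma map_split5: "map f w = l1 @ l2 @ l3 @ l4 @ l5 \<Longrightarrow>
  \<exists>a b c d e. w = a@b@c@d@e \<and> l1 = map f a \<and> l2 = map f b \<and> l3 = map f c \<and> l4 = map f d \<and> l5 = map f e"
proof -
  assume h: "map f w = l1 @ l2 @ l3 @ l4 @ l5"
  obtain a w1 where 1: "w = a @ w1" "l1 = map f a" "map f w1 = l2 @ l3 @ l4 @ l5"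
    using h by (metis map_eq_append_conv)
  obtain b w2 where 2: "w1 = b @ w2" "l2 = map f b" "map f w2 = l3 @ l4 @ l5"
    using 1(3) by (metis map_eq_append_conv)
  obtain c w3 where 3: "w2 = c @ w3" "l3 = map f c" "map f w3 = l4 @ l5"
    using 2(3) by (metis map_eq_append_conv)
  obtain d e where 4: "w3 = d @ e" "l4 = map f d" "l5 = map f e"
    using 3(3) by (metis map_eq_append_conv)
  show ?thesis using 1 2 3 4 by blast
qed

lemma pumping:
  assumes fin: "finite P"
  shows "\<exists>K. \<forall>w \<in> cfg_lang P S. K < length w \<longrightarrow> (\<exists>a p m q b. w = a@p@m@q@b \<and>
     length (p@m@q) \<le> K \<and> p@q \<noteq> [] \<and> (\<forall>i. a @ pw p i @ m @ pw q i @ b \<in> cfg_lang P S))"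
proof -
  define m where "m = Max (insert 1 ((\<lambda>(A,al). length al) ` P))"
  define N where "N = card (fst ` P)"
  have finm: "finite (insert 1 ((\<lambda>(A,al). length al) ` P))" using fin by simp
  have m1: "1 \<le> m" unfolding m_def using finm by (rule Max_ge) simp
  have mP: "\<forall>(A,al)\<in>P. length al \<le> m"
  proof
    fix x assume "x \<in> P"
    then have "(\<lambda>(A,al). length al) x \<in> insert 1 ((\<lambda>(A,al). length al) ` P)" by blast
    then have "(\<lambda>(A,al). length al) x \<le> m" unfolding m_def using finm by (intro Max_ge)
    then show "(\<lambda>(A,al). length al \<le> m) x" by (cases x) simp
  qed
  have bound: "length (fringe u) \<le> m ^ N" if "valid P u" "rf u" for u
  proof -
    have "height u \<le> card (nts u)" using rf_height that(2) .
    also have "\<dots> \<le> N" unfolding N_def using nts_P[OF that(1)] fin by (intro card_mono) auto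
    finally have "height u \<le> N" .
    then have "m ^ height u \<le> m ^ N" using m1 by (intro power_increasing)
    moreover have "length (fringe u) \<le> m ^ height u" using height_bound[OF mP m1 that(1)] .
    ultimately show ?thesis by linarith
  qed
  show ?thesis
  proof (rule exI[of _ "m ^ Suc N"], intro ballI impI)
    fix w assume w: "w \<in> cfg_lang P S" "m ^ Suc N < length w"
    from w(1) obtain t0 where t0: "valid P t0 \<and> root t0 = Inl S \<and> fringe t0 = map Inr w"
      unfolding lang_tree by (elim exE)
    obtain t where t: "valid P t \<and> root t = Inl S \<and> fringe t = map Inr w"
      and tmin: "\<forall>t'. valid P t' \<and> root t' = Inl S \<and> fringe t' = map Inr w \<longrightarrow> tsize t \<le> tsize t'"
      using ex_has_least_nat[of "\<lambda>t. valid P t \<and> root t = Inl S \<and> fringe t = map Inr w" t0 tsize, OF t0]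
      by (elim exE conjE) blast
    have nrf: "\<not> rf t"
    proof
      assume "rf t"
      then have "length (fringe t) \<le> m ^ N" using bound t by blast
      moreover have "m ^ N \<le> m ^ Suc N" using m1 by (intro power_increasing) auto
      ultimately show False using w(2) t by simp
    qed
    from find_rep[OF _ nrf] t obtain B ts where T': "sub (Nd B ts) t" "\<forall>c\<in>set ts. rf c"
      "\<exists>c\<in>set ts. B \<in> nts c" by blast
    then obtain c where c: "c \<in> set ts" "B \<in> nts c" by blast
    from nts_sub[OF c(2)] obtain ts' where s2c: "sub (Nd B ts') c" by blast
    have sub2: "sub (Nd B ts') (Nd B ts)" using s2c c(1) by (rule sub_step)
    have vT': "valid P (Nd B ts)" using sub_valid T'(1) t by blast
    have lenT': "length (fringe (Nd B ts)) \<le> m ^ Suc N"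
    proof -
      have "\<forall>u\<in>set ts. length (fringe u) \<le> m ^ N" using vT' T'(2) bound by auto
      then have "length (fringe (Nd B ts)) \<le> length ts * m ^ N" using concat_len_bound by simp
      also have "length ts \<le> m" using vT' mP by fastforce
      then have "length ts * m ^ N \<le> m * m ^ N" by (rule mult_right_mono) simp
      finally show ?thesis by simp
    qed
    have size2: "tsize (Nd B ts') < tsize (Nd B ts)"
    proof -
      have "tsize (Nd B ts') \<le> tsize c" using sub_size[OF s2c] .
      also have "tsize c \<le> sum_list (map tsize ts)" using c(1) by (simp add: member_le_sum_list)
      finally show ?thesis by simp
    qed
    from sub_replace[OF T'(1)] t obtain l1 r1 where R1: "fringe t = l1 @ fringe (Nd B ts) @ r1"
      "\<forall>s'. valid P s' \<and> root s' = root (Nd B ts) \<longrightarrow>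
      (\<exists>t'. valid P t' \<and> root t' = root t \<and> fringe t' = l1 @ fringe s' @ r1 \<and>
            tsize t' + tsize (Nd B ts) = tsize t + tsize s')" by blast
    from sub_replace[OF sub2 vT'] obtain l2 r2 where R2: "fringe (Nd B ts) = l2 @ fringe (Nd B ts') @ r2"
      "valid P (Nd B ts')"
      "\<forall>s'. valid P s' \<and> root s' = root (Nd B ts') \<longrightarrow>
      (\<exists>t'. valid P t' \<and> root t' = root (Nd B ts) \<and> fringe t' = l2 @ fringe s' @ r2 \<and>
            tsize t' + tsize (Nd B ts') = tsize (Nd B ts) + tsize s')" by blast
    have ne: "l2 @ r2 \<noteq> []"
    proof
      assume "l2 @ r2 = []"
      then have e: "fringe (Nd B ts) = fringe (Nd B ts')" using R2(1) by simp
      from R1(2) R2(2) obtain t' where t': "valid P t'" "root t' = root t"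
        "fringe t' = l1 @ fringe (Nd B ts') @ r1"
        "tsize t' + tsize (Nd B ts) = tsize t + tsize (Nd B ts')"
        by (metis root.simps(2))
      have "fringe t' = map Inr w" using t'(3) e R1(1) t by simp
      then have "tsize t \<le> tsize t'" using tmin t'(1,2) t by simp
      then show False using t'(4) size2 by linarith
    qed
    have pump: "\<exists>s. valid P s \<and> root s = Inl B \<and> fringe s = pw l2 i @ fringe (Nd B ts') @ pw r2 i" for i
    proof (induction i)
      case 0 show ?case using R2(2) by (intro exI[of _ "Nd B ts'"]) (simp add: pw_def)
    next
      case (Suc i)
      then obtain s where s: "valid P s" "root s = Inl B" "fringe s = pw l2 i @ fringe (Nd B ts') @ pw r2 i"
        by blast
      from R2(3) s obtain t' where "valid P t'" "root t' = Inl B" "fringe t' = l2 @ fringe s @ r2"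
        by (metis root.simps(2))
      moreover have "pw l2 (Suc i) = l2 @ pw l2 i" by (rule pw_Suc1)
      moreover have "pw r2 (Suc i) = pw r2 i @ r2" by (rule pw_Suc2)
      ultimately show ?case using s(3) by (intro exI[of _ t']) simp
    qed
    have "map Inr w = l1 @ l2 @ fringe (Nd B ts') @ r2 @ r1" using t R1(1) R2(1) by simp
    from map_split5[OF this] obtain a p mm q b where d: "w = a@p@mm@q@b" "l1 = map Inr a"
      "l2 = map Inr p" "fringe (Nd B ts') = map Inr mm" "r2 = map Inr q" "r1 = map Inr b"
      by blast
    show "\<exists>a p mm q b. w = a@p@mm@q@b \<and>
     length (p@mm@q) \<le> m ^ Suc N \<and> p@q \<noteq> [] \<and> (\<forall>i. a @ pw p i @ mm @ pw q i @ b \<in> cfg_lang P S)"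
    proof (rule exI[of _ a], rule exI[of _ p], rule exI[of _ mm], rule exI[of _ q], rule exI[of _ b],
        intro conjI allI)
      show "w = a@p@mm@q@b" by (rule d(1))
      have "length (fringe (Nd B ts)) = length (l2 @ fringe (Nd B ts') @ r2)" using R2(1) by (rule arg_cong)
      also have "\<dots> = length (p@mm@q)" using d(3,4,5) by simp
      finally show "length (p@mm@q) \<le> m ^ Suc N" using lenT' by linarith
      show "p @ q \<noteq> []" using ne d(3,5) by simp
      fix i
      obtain s where s: "valid P s" "root s = Inl B" "fringe s = pw l2 i @ fringe (Nd B ts') @ pw r2 i"
        using pump by blast
      have "valid P s \<and> root s = root (Nd B ts)" using s by simp
      then obtain t' where t': "valid P t'" "root t' = root t" "fringe t' = l1 @ fringe s @ r1"
        using R1(2) by blast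
      have "fringe t' = map Inr (a @ pw p i @ mm @ pw q i @ b)"
        unfolding t'(3) s(3) d(2,3,5,6) using d(4) by (simp add: map_pw)
      then have "valid P t' \<and> root t' = Inl S \<and> fringe t' = map Inr (a @ pw p i @ mm @ pw q i @ b)"
        using t' t by simp
      then show "a @ pw p i @ mm @ pw q i @ b \<in> cfg_lang P S" unfolding lang_tree by (rule exI)
    qed
  qed
qed



definition G :: "nat cfg_prods" where
  "G = {(0,[Inl 1]), (0,[Inl 2]), (1,[Inr 0, Inl 3, Inr 6]), (3,[Inr 1, Inl 3, Inr 3]), (3,[Inr 2]),
        (2,[Inr 0, Inl 4, Inr 2]), (4,[Inr 1, Inl 4, Inr 5]), (4,[Inr 4])}"

definition xw :: "nat \<Rightarrow> nat list" where "xw n = [0] @ replicate n 1 @ [2] @ replicate n 3 @ [6]"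
definition yw :: "nat \<Rightarrow> nat list" where "yw n = [0] @ replicate n 1 @ [4] @ replicate n 5 @ [2]"

lemma cnt_rep: "count_list (replicate n a) b = (if a = b then n else 0)"
  by (induction n) auto

lemma rep_comm: "replicate n x @ x # xs = x # replicate n x @ xs"
  by (induction n) auto

lemma stepG: "(A, al) \<in> G \<Longrightarrow> derive1 G (l @ [Inl A] @ r) (l @ al @ r)"
  unfolding derive1_def by blast

lemma x_iter: "(derive1 G)\<^sup>*\<^sup>* (map Inr [0] @ [Inl 3] @ map Inr [6])
   (map Inr (0 # replicate n 1) @ [Inl 3] @ map Inr (replicate n 3 @ [6]))"
proof (induction n)
  case 0 show ?case by simp
next
  case (Suc n)
  have s1: "derive1 G (map Inr (0 # replicate n 1) @ [Inl 3] @ map Inr (replicate n 3 @ [6]))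
     (map Inr (0 # replicate n 1) @ [Inr 1, Inl 3, Inr 3] @ map Inr (replicate n 3 @ [6]))"
    by (rule stepG) (simp add: G_def)
  have e: "map Inr (0 # replicate n 1) @ [Inr 1, Inl 3, Inr 3] @ map Inr (replicate n 3 @ [6])
     = map Inr (0 # replicate (Suc n) 1) @ [Inl 3] @ map Inr (replicate (Suc n) 3 @ [6])"
    by (simp add: rep_comm)
  show ?case using rtranclp.rtrancl_into_rtrancl[OF Suc.IH s1] unfolding e .
qed

lemma y_iter: "(derive1 G)\<^sup>*\<^sup>* (map Inr [0] @ [Inl 4] @ map Inr [2])
   (map Inr (0 # replicate n 1) @ [Inl 4] @ map Inr (replicate n 5 @ [2]))"
proof (induction n)
  case 0 show ?case by simp
next
  case (Suc n)
  have s1: "derive1 G (map Inr (0 # replicate n 1) @ [Inl 4] @ map Inr (replicate n 5 @ [2]))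
     (map Inr (0 # replicate n 1) @ [Inr 1, Inl 4, Inr 5] @ map Inr (replicate n 5 @ [2]))"
    by (rule stepG) (simp add: G_def)
  have e: "map Inr (0 # replicate n 1) @ [Inr 1, Inl 4, Inr 5] @ map Inr (replicate n 5 @ [2])
     = map Inr (0 # replicate (Suc n) 1) @ [Inl 4] @ map Inr (replicate (Suc n) 5 @ [2])"
    by (simp add: rep_comm)
  show ?case using rtranclp.rtrancl_into_rtrancl[OF Suc.IH s1] unfolding e .
qed

lemma xw_in: "xw n \<in> cfg_lang G 0"
proof -
  have 1: "derive1 G ([] @ [Inl 0] @ []) ([] @ [Inl 1] @ [])" by (rule stepG) (simp add: G_def)
  have 2: "derive1 G ([] @ [Inl 1] @ []) ([] @ [Inr 0, Inl 3, Inr 6] @ [])" by (rule stepG) (simp add: G_def)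
  have 3: "derive1 G (map Inr (0 # replicate n 1) @ [Inl 3] @ map Inr (replicate n 3 @ [6]))
     (map Inr (0 # replicate n 1) @ [Inr 2] @ map Inr (replicate n 3 @ [6]))"
    by (rule stepG) (simp add: G_def)
  have e: "map Inr (0 # replicate n 1) @ [Inr 2] @ map Inr (replicate n 3 @ [6]) = map Inr (xw n)"
    by (simp add: xw_def)
  have h: "(derive1 G)\<^sup>*\<^sup>* [Inl 0] (map Inr [0] @ [Inl 3] @ map Inr [6])" using 1 2 by simp
  have h2: "(derive1 G)\<^sup>*\<^sup>* [Inl 0] (map Inr (0 # replicate n 1) @ [Inl 3] @ map Inr (replicate n 3 @ [6]))"
    using x_iter[of n] by (rule rtranclp_trans[OF h])
  have "(derive1 G)\<^sup>*\<^sup>* [Inl 0] (map Inr (xw n))" using rtranclp.rtrancl_into_rtrancl[OF h2 3] unfolding e .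
  then show ?thesis unfolding cfg_lang_def by simp
qed

lemma yw_in: "yw n \<in> cfg_lang G 0"
proof -
  have 1: "derive1 G ([] @ [Inl 0] @ []) ([] @ [Inl 2] @ [])" by (rule stepG) (simp add: G_def)
  have 2: "derive1 G ([] @ [Inl 2] @ []) ([] @ [Inr 0, Inl 4, Inr 2] @ [])" by (rule stepG) (simp add: G_def)
  have 3: "derive1 G (map Inr (0 # replicate n 1) @ [Inl 4] @ map Inr (replicate n 5 @ [2]))
     (map Inr (0 # replicate n 1) @ [Inr 4] @ map Inr (replicate n 5 @ [2]))"
    by (rule stepG) (simp add: G_def)
  have e: "map Inr (0 # replicate n 1) @ [Inr 4] @ map Inr (replicate n 5 @ [2]) = map Inr (yw n)"
    by (simp add: yw_def)
  have h: "(derive1 G)\<^sup>*\<^sup>* [Inl 0] (map Inr [0] @ [Inl 4] @ map Inr [2])" using 1 2 by simp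
  have h2: "(derive1 G)\<^sup>*\<^sup>* [Inl 0] (map Inr (0 # replicate n 1) @ [Inl 4] @ map Inr (replicate n 5 @ [2]))"
    using y_iter[of n] by (rule rtranclp_trans[OF h])
  have "(derive1 G)\<^sup>*\<^sup>* [Inl 0] (map Inr (yw n))" using rtranclp.rtrancl_into_rtrancl[OF h2 3] unfolding e .
  then show ?thesis unfolding cfg_lang_def by simp
qed

lemma uniq: "map Inr p @ [Inl N] @ map Inr q = l @ [Inl A] @ r \<Longrightarrow>
  l = map Inr p \<and> A = N \<and> r = map Inr q"
proof (induction p arbitrary: l)
  case Nil
  show ?case
  proof (cases l)
    case Nil then show ?thesis using Nil.prems by simp
  next
    case (Cons x l')
    then have "Inl A \<in> set (map Inr q)" using Nil.prems by auto
    then show ?thesis by auto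
  qed
next
  case (Cons a p)
  show ?case
  proof (cases l)
    case Nil then show ?thesis using Cons.prems by simp
  next
    case (Cons x l')
    then have "x = Inr a" "map Inr p @ [Inl N] @ map Inr q = l' @ [Inl A] @ r" using Cons.prems by auto
    then show ?thesis using Cons.IH Cons by auto
  qed
qed

lemma noinl: "map Inr w = l @ [Inl A] @ r \<Longrightarrow> False"
proof -
  assume "map Inr w = l @ [Inl A] @ r"
  then have "Inl A \<in> set (map Inr w)" by simp
  then show False by auto
qed

definition sinv :: "(nat + nat) list \<Rightarrow> bool" where
  "sinv al \<longleftrightarrow> al = [Inl 0] \<or> al = [Inl 1] \<or> al = [Inl 2] \<or>
     (\<exists>n. al = map Inr (0 # replicate n 1) @ [Inl 3] @ map Inr (replicate n 3 @ [6])) \<or>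
     (\<exists>n. al = map Inr (0 # replicate n 1) @ [Inl 4] @ map Inr (replicate n 5 @ [2])) \<or>
     (\<exists>n. al = map Inr (xw n)) \<or> (\<exists>n. al = map Inr (yw n))"

lemma single: "[Inl N] = l @ [Inl A] @ r \<Longrightarrow> l = [] \<and> A = N \<and> r = []"
  using uniq[of "[]" N "[]" l A r] by simp

lemma inv_step:
  assumes "sinv a" "derive1 G a b" shows "sinv b"
proof -
  from assms(2) obtain l A r al where d: "a = l @ [Inl A] @ r" "(A, al) \<in> G" "b = l @ al @ r"
    unfolding derive1_def by blast
  from assms(1) consider "a = [Inl 0]" | "a = [Inl 1]" | "a = [Inl 2]"
    | n where "a = map Inr (0 # replicate n 1) @ [Inl 3] @ map Inr (replicate n 3 @ [6])"
    | n where "a = map Inr (0 # replicate n 1) @ [Inl 4] @ map Inr (replicate n 5 @ [2])"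
    | n where "a = map Inr (xw n)" | n where "a = map Inr (yw n)"
    unfolding sinv_def by blast
  then show ?thesis
  proof cases
    case 1
    then have "[Inl 0] = l @ [Inl A] @ r" using d(1) by argo
    then have "l = [] \<and> A = 0 \<and> r = []" by (rule single)
    then show ?thesis using d(2,3) unfolding G_def sinv_def by auto
  next
    case 2
    then have "[Inl 1] = l @ [Inl A] @ r" using d(1) by argo
    then have "l = [] \<and> A = 1 \<and> r = []" by (rule single)
    then have "b = [Inr 0, Inl 3, Inr 6]" using d(2,3) unfolding G_def by auto
    moreover have "[Inr 0, Inl 3, Inr 6] = map Inr (0 # replicate 0 1) @ [Inl 3] @ map Inr (replicate 0 3 @ [6])"
      by simp
    ultimately show ?thesis unfolding sinv_def by metis
  next
    case 3
    then have "[Inl 2] = l @ [Inl A] @ r" using d(1) by argo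
    then have "l = [] \<and> A = 2 \<and> r = []" by (rule single)
    then have "b = [Inr 0, Inl 4, Inr 2]" using d(2,3) unfolding G_def by auto
    moreover have "[Inr 0, Inl 4, Inr 2] = map Inr (0 # replicate 0 1) @ [Inl 4] @ map Inr (replicate 0 5 @ [2])"
      by simp
    ultimately show ?thesis unfolding sinv_def by metis
  next
    case (4 n)
    then have "map Inr (0 # replicate n 1) @ [Inl 3] @ map Inr (replicate n 3 @ [6]) = l @ [Inl A] @ r"
      using d(1) by argo
    then have u: "l = map Inr (0 # replicate n 1) \<and> A = 3 \<and> r = map Inr (replicate n 3 @ [6])"
      by (rule uniq)
    then have "al = [Inr 1, Inl 3, Inr 3] \<or> al = [Inr 2]" using d(2) unfolding G_def by auto
    then show ?thesis
    proof
      assume "al = [Inr 1, Inl 3, Inr 3]"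
      then have "b = map Inr (0 # replicate (Suc n) 1) @ [Inl 3] @ map Inr (replicate (Suc n) 3 @ [6])"
        using d(3) u by (simp add: rep_comm)
      then show ?thesis unfolding sinv_def by blast
    next
      assume "al = [Inr 2]"
      then have "b = map Inr (xw n)" using d(3) u by (simp add: xw_def)
      then show ?thesis unfolding sinv_def by blast
    qed
  next
    case (5 n)
    then have "map Inr (0 # replicate n 1) @ [Inl 4] @ map Inr (replicate n 5 @ [2]) = l @ [Inl A] @ r"
      using d(1) by argo
    then have u: "l = map Inr (0 # replicate n 1) \<and> A = 4 \<and> r = map Inr (replicate n 5 @ [2])"
      by (rule uniq)
    then have "al = [Inr 1, Inl 4, Inr 5] \<or> al = [Inr 4]" using d(2) unfolding G_def by auto
    then show ?thesis
    proof
      assume "al = [Inr 1, Inl 4, Inr 5]"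
      then have "b = map Inr (0 # replicate (Suc n) 1) @ [Inl 4] @ map Inr (replicate (Suc n) 5 @ [2])"
        using d(3) u by (simp add: rep_comm)
      then show ?thesis unfolding sinv_def by blast
    next
      assume "al = [Inr 4]"
      then have "b = map Inr (yw n)" using d(3) u by (simp add: yw_def)
      then show ?thesis unfolding sinv_def by blast
    qed
  next
    case (6 n) then have "map Inr (xw n) = l @ [Inl A] @ r" using d(1) by argo
    then show ?thesis by (rule noinl[THEN FalseE])
  next
    case (7 n) then have "map Inr (yw n) = l @ [Inl A] @ r" using d(1) by argo
    then show ?thesis by (rule noinl[THEN FalseE])
  qed
qed

lemma L_upper: "w \<in> cfg_lang G 0 \<Longrightarrow> (\<exists>n. w = xw n) \<or> (\<exists>n. w = yw n)"
proof -
  assume "w \<in> cfg_lang G 0"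
  then have "(derive1 G)\<^sup>*\<^sup>* [Inl (0::nat)] (map Inr w)" unfolding cfg_lang_def by simp
  then have "sinv (map Inr w)"
  proof (induction rule: rtranclp_induct)
    case base show ?case unfolding sinv_def by simp
  next
    case (step b c) then show ?case using inv_step by blast
  qed
  then consider "map Inr w = [Inl (0::nat)]" | "map Inr w = [Inl (1::nat)]" | "map Inr w = [Inl (2::nat)]"
    | n where "map Inr w = map Inr (0 # replicate n 1) @ [Inl (3::nat)] @ map Inr (replicate n 3 @ [6])"
    | n where "map Inr w = map Inr (0 # replicate n 1) @ [Inl (4::nat)] @ map Inr (replicate n 5 @ [2])"
    | n where "map Inr w = (map Inr (xw n) :: (nat+nat) list)" | n where "map Inr w = (map Inr (yw n) :: (nat+nat) list)"
    unfolding sinv_def by blast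
  then show ?thesis
  proof cases
    case 1 then have "(map Inr w::(nat+nat) list) = [] @ [Inl 0] @ []" by simp
    then show ?thesis by (rule noinl[THEN FalseE])
  next
    case 2 then have "(map Inr w::(nat+nat) list) = [] @ [Inl 1] @ []" by simp
    then show ?thesis by (rule noinl[THEN FalseE])
  next
    case 3 then have "(map Inr w::(nat+nat) list) = [] @ [Inl 2] @ []" by simp
    then show ?thesis by (rule noinl[THEN FalseE])
  next
    case 4 then show ?thesis by (rule noinl[THEN FalseE])
  next
    case 5 then show ?thesis by (rule noinl[THEN FalseE])
  next
    case 6 then show ?thesis by (auto simp: inj_def)
  next
    case 7 then show ?thesis by (auto simp: inj_def)
  qed
qed

definition J :: "nat list \<Rightarrow> bool" where
  "J r \<longleftrightarrow> count_list r 0 = 1 \<and> count_list r 2 = 1 \<and> (count_list r 4 = 0 \<longrightarrow> count_list r 5 = 0) \<and>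
     (count_list r 6 = 0 \<longrightarrow> count_list r 3 = 0) \<and>
     (count_list r 4 = 1 \<longrightarrow> count_list r 1 = count_list r 5 \<and> count_list r 3 \<le> count_list r 1)"

lemma suffix_set: "A @ B = p @ [s] @ q \<Longrightarrow> s \<notin> set B \<Longrightarrow> set B \<subseteq> set q"
proof -
  assume h: "A @ B = p @ [s] @ q" and ns: "s \<notin> set B"
  then obtain us where "(A = p @ us \<and> us @ B = [s] @ q) \<or> (A @ us = p \<and> B = us @ [s] @ q)"
    using append_eq_append_conv2[of A B p "[s] @ q"] by blast
  then show ?thesis
  proof
    assume a: "A = p @ us \<and> us @ B = [s] @ q"
    show ?thesis
    proof (cases us)
      case Nil then show ?thesis using a ns by auto
    next
      case (Cons c us') then have "us' @ B = q" using a by simp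
      then show ?thesis by auto
    qed
  next
    assume "A @ us = p \<and> B = us @ [s] @ q"
    then show ?thesis using ns by auto
  qed
qed

lemma cx: "count_list (xw n) c = (if c = 0 then 1 else 0) + (if c = 1 then n else 0) + (if c = 2 then 1 else 0)
   + (if c = 3 then n else 0) + (if c = 6 then 1 else 0)"
  by (simp add: xw_def cnt_rep)

lemma cy: "count_list (yw n) c = (if c = 0 then 1 else 0) + (if c = 1 then n else 0) + (if c = 4 then 1 else 0)
   + (if c = 5 then n else 0) + (if c = 2 then 1 else 0)"
  by (simp add: yw_def cnt_rep)

lemma mem_cnt: "a \<in> set xs \<Longrightarrow> count_list xs a \<ge> 1"
  by (induction xs) auto

lemma J_ins:
  assumes "x \<in> cfg_lang G 0" "y \<in> cfg_lang G 0" "r \<in> outfix_ins x y"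
  shows "J r"
proof -
  obtain x1 u z v x2 where d: "r = x1 @ u @ z @ v @ x2" "x = x1 @ u @ v @ x2" "y = u @ z @ v"
    "u \<noteq> []" "v \<noteq> []"
    using assms(3) unfolding outfix_ins_def by blast
  have hx: "hd x = 0" "count_list x 0 = 1" using L_upper[OF assms(1)] by (auto simp: xw_def yw_def cnt_rep)
  have hy: "hd y = 0" using L_upper[OF assms(2)] by (auto simp: xw_def yw_def)
  have "hd u = 0" using d(3,4) hy by simp
  then have u0: "count_list u 0 \<ge> 1" using d(4) by (cases u) auto
  have x1: "x1 = []"
  proof (rule ccontr)
    assume "x1 \<noteq> []"
    then have "hd x1 = 0" using d(2) hx(1) by simp
    then have "count_list x1 0 \<ge> 1" using \<open>x1 \<noteq> []\<close> by (cases x1) auto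
    then show False using hx(2) u0 d(2) by simp
  qed
  have xs: "x = (u @ v) @ x2" using d(2) x1 by simp
  have cr: "count_list r c = count_list y c + count_list x2 c" for c using d(1,3) x1 by simp
  have lv: "last y \<in> set v" using d(3,5) by simp
  have x2e: "x2 = []" if "last x = s" "count_list x s = 1" "s \<in> set v" for s
  proof (rule ccontr)
    assume ne: "x2 \<noteq> []"
    then have "last x2 = s" using xs that(1) by simp
    then have "s \<in> set x2" using ne by auto
    then have "count_list x2 s \<ge> 1" by (rule mem_cnt)
    moreover have "count_list v s \<ge> 1" using that(3) by (rule mem_cnt)
    ultimately show False using that(2) xs by simp
  qed
  from L_upper[OF assms(2)] obtain m where ym: "y = xw m \<or> y = yw m" by blast
  from L_upper[OF assms(1)] obtain n where xn: "x = xw n \<or> x = yw n" by blast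
  show ?thesis
  proof (cases "y = xw m")
    case True
    then have "6 \<in> set v" using lv by (simp add: xw_def)
    then have "6 \<in> set x" using xs by auto
    then have xx: "x = xw n" using xn by (auto simp: yw_def)
    have "x2 = []" using x2e[of 6] xx \<open>6 \<in> set v\<close> by (simp add: xw_def cnt_rep)
    then show ?thesis unfolding J_def using cr True by (simp add: cx)
  next
    case False
    then have yy: "y = yw m" using ym by blast
    then have "2 \<in> set v" using lv by (simp add: yw_def)
    show ?thesis
    proof (cases "x = yw n")
      case True
      have "x2 = []" using x2e[of 2] True \<open>2 \<in> set v\<close> by (simp add: yw_def cnt_rep)
      then show ?thesis unfolding J_def using cr yy by (simp add: cy)
    next
      case False
      then have xx: "x = xw n" using xn by blast
      have "count_list v 2 \<ge> 1" using \<open>2 \<in> set v\<close> by (rule mem_cnt)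
      moreover have "count_list x 2 = 1" using xx by (simp add: cx)
      ultimately have "count_list x2 2 = 0" using xs by simp
      then have "2 \<notin> set x2" by (simp add: count_list_0_iff)
      moreover have "(u @ v) @ x2 = (0 # replicate n 1) @ [2] @ (replicate n 3 @ [6])"
        using xs xx by (simp add: xw_def)
      ultimately have sx2: "set x2 \<subseteq> set (replicate n 3 @ [6])" by (intro suffix_set)
      have z: "count_list x2 c = 0" if "c \<noteq> 3" "c \<noteq> 6" for c
      proof -
        have "c \<notin> set x2" using sx2 that by (auto dest: in_set_replicate[THEN iffD1])
        then show ?thesis by simp
      qed
      have "count_list x 1 = n" using xx by (simp add: cx)
      then have "count_list u 1 + count_list v 1 = n" using xs z[of 1] by simp
      moreover have "count_list y 1 = m" using yy by (simp add: cy)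
      ultimately have nm: "n \<le> m" using d(3) by simp
      have "count_list x 3 = n" using xx by (simp add: cx)
      then have "count_list x2 3 \<le> n" using xs by simp
      have e6: "count_list x2 6 = 0 \<longrightarrow> count_list x2 3 = 0"
      proof
        assume c6: "count_list x2 6 = 0"
        have "x2 = []"
        proof (rule ccontr)
          assume ne: "x2 \<noteq> []"
          have "last x = 6" using xx by (simp add: xw_def)
          then have "last x2 = 6" using xs ne by simp
          then have "6 \<in> set x2" using ne by (metis last_in_set)
          then show False using c6 mem_cnt[of 6 x2] by simp
        qed
        then show "count_list x2 3 = 0" by simp
      qed
      show ?thesis unfolding J_def using cr yy nm z[of 0] z[of 1] z[of 2] z[of 4] z[of 5] e6 \<open>count_list x2 3 \<le> n\<close>
        by (simp add: cy)
    qed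
  qed
qed

lemma loc1: "s @ f @ t = A @ R \<Longrightarrow> x \<in> set f \<Longrightarrow> x \<notin> set R \<Longrightarrow> length s < length A"
proof (rule ccontr)
  assume h: "s @ f @ t = A @ R" "x \<in> set f" "x \<notin> set R" "\<not> length s < length A"
  have "f @ t = drop (length s) (s @ f @ t)" by simp
  also have "\<dots> = drop (length s - length A) R" using h(1,4) by simp
  finally have "set (f @ t) \<subseteq> set R" by (metis set_drop_subset)
  then show False using h(2,3) by auto
qed

lemma loc: "s @ f @ t = A @ M @ C \<Longrightarrow> x \<in> set f \<Longrightarrow> x \<notin> set M \<Longrightarrow> x \<notin> set C \<Longrightarrow>
  y \<in> set f \<Longrightarrow> y \<notin> set A \<Longrightarrow> y \<notin> set M \<Longrightarrow> length M < length f"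
proof -
  assume h: "s @ f @ t = A @ M @ C" "x \<in> set f" "x \<notin> set M" "x \<notin> set C"
    "y \<in> set f" "y \<notin> set A" "y \<notin> set M"
  have 1: "length s < length A" using loc1[of s f t A "M @ C" x] h by simp
  have "rev t @ rev f @ rev s = rev C @ (rev M @ rev A)" using arg_cong[OF h(1), of rev] by simp
  then have 2: "length (rev t) < length (rev C)" using loc1[of "rev t" "rev f" "rev s" "rev C" "rev M @ rev A" y] h by simp
  have "length s + length f + length t = length A + length M + length C" using arg_cong[OF h(1), of length] by simp
  then show ?thesis using 1 2 by simp
qed

lemma cnt2_le: "a \<noteq> b \<Longrightarrow> count_list xs a + count_list xs b \<le> length xs"
  by (induction xs) auto

theorem theorem5p1:
  shows "\<exists>L :: nat list set. context_free L \<and> \<not> context_free (outfix_ins_lang L L)"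
proof (intro exI conjI)
  let ?L = "cfg_lang G 0"
  show "context_free ?L" unfolding context_free_def
    by (rule exI[of _ G], rule exI[of _ 0]) (simp add: G_def)
  show "\<not> context_free (outfix_ins_lang ?L ?L)"
  proof
    assume "context_free (outfix_ins_lang ?L ?L)"
    then obtain P S where fin: "finite P" and eq: "outfix_ins_lang ?L ?L = cfg_lang P S"
      unfolding context_free_def by blast
    from pumping[OF fin, of S] obtain K where K: "\<forall>w \<in> cfg_lang P S. K < length w \<longrightarrow> (\<exists>a p m q b. w = a@p@m@q@b \<and>
     length (p@m@q) \<le> K \<and> p@q \<noteq> [] \<and> (\<forall>i. a @ pw p i @ m @ pw q i @ b \<in> cfg_lang P S))" by blast
    define k where "k = Suc K"
    define R where "R = yw k @ replicate k 3 @ [6]"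
    have "R \<in> outfix_ins (xw k) (yw k)"
      unfolding outfix_ins_def
      by (rule CollectI, rule exI[of _ "[]"], rule exI[of _ "0 # replicate k 1"],
          rule exI[of _ "4 # replicate k 5"], rule exI[of _ "[2]"], rule exI[of _ "replicate k 3 @ [6]"])
        (simp add: R_def xw_def yw_def)
    then have "R \<in> outfix_ins_lang ?L ?L" unfolding outfix_ins_lang_def using xw_in yw_in by blast
    then have Rin: "R \<in> cfg_lang P S" using eq by simp
    have "K < length R" unfolding R_def yw_def k_def by simp
    with bspec[OF K Rin] have "\<exists>a p m q b. R = a@p@m@q@b \<and>
     length (p@m@q) \<le> K \<and> p@q \<noteq> [] \<and> (\<forall>i. a @ pw p i @ m @ pw q i @ b \<in> cfg_lang P S)" by (rule mp)
    then obtain a p mm q b where w: "R = a@p@mm@q@b" "length (p@mm@q) \<le> K" "p@q \<noteq> []"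
      "\<forall>i. a @ pw p i @ mm @ pw q i @ b \<in> cfg_lang P S" by (elim exE conjE) blast
    have Jw: "J v" if "v \<in> cfg_lang P S" for v
    proof -
      have "v \<in> outfix_ins_lang ?L ?L" using that eq by simp
      then obtain x y where "x \<in> ?L" "y \<in> ?L" "v \<in> outfix_ins x y" unfolding outfix_ins_lang_def by blast
      then show ?thesis by (rule J_ins)
    qed
    have J0: "J (a @ mm @ b)" using Jw w(4)[rule_format, of 0] by (simp add: pw_def)
    have J2: "J (a @ p @ p @ mm @ q @ q @ b)"
      using Jw w(4)[rule_format, of 2] by (simp add: pw_def numeral_2_eq_2)
    have cR: "count_list R c = count_list a c + count_list p c + count_list mm c + count_list q c + count_list b c" for c
      using w(1) by simp
    have cRv: "count_list R c = (if c = 0 then 1 else 0) + (if c = 1 then k else 0) + (if c = 4 then 1 else 0)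
      + (if c = 5 then k else 0) + (if c = 2 then 1 else 0) + (if c = 3 then k else 0) + (if c = 6 then 1 else 0)" for c
      unfolding R_def by (simp add: cy cnt_rep)
    have c0: "count_list a c + count_list mm c + count_list b c = count_list (a @ mm @ b) c" for c by simp
    have c2: "count_list a c + 2 * count_list p c + count_list mm c + 2 * count_list q c + count_list b c
       = count_list (a @ p @ p @ mm @ q @ q @ b) c" for c by simp
    have lenpq: "length (p @ q) \<le> K" using w(2) by simp
    have Z0: "count_list p 0 + count_list q 0 = 0"
      using J0 cR[of 0] cRv[of 0] c0[of 0] unfolding J_def by simp
    have Z2: "count_list p 2 + count_list q 2 = 0"
      using J0 cR[of 2] cRv[of 2] c0[of 2] unfolding J_def by simp
    have Z4: "count_list p 4 + count_list q 4 = 0"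
    proof (rule ccontr)
      assume nz: "count_list p 4 + count_list q 4 \<noteq> 0"
      then have "count_list (a @ mm @ b) 4 = 0" using cR[of 4] cRv[of 4] c0[of 4] by (simp; arith)
      then have "count_list (a @ mm @ b) 5 = 0" using J0 unfolding J_def by blast
      then have "count_list p 5 + count_list q 5 = k" using cR[of 5] cRv[of 5] c0[of 5] by (simp; arith)
      moreover have "count_list (p@q) 4 + count_list (p@q) 5 \<le> length (p@q)" by (rule cnt2_le) simp
      ultimately show False using nz lenpq unfolding k_def by simp
    qed
    have Z6: "count_list p 6 + count_list q 6 = 0"
    proof (rule ccontr)
      assume nz: "count_list p 6 + count_list q 6 \<noteq> 0"
      then have "count_list (a @ mm @ b) 6 = 0" using cR[of 6] cRv[of 6] c0[of 6] by (simp; arith)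
      then have "count_list (a @ mm @ b) 3 = 0" using J0 unfolding J_def by blast
      then have "count_list p 3 + count_list q 3 = k" using cR[of 3] cRv[of 3] c0[of 3] by (simp; arith)
      moreover have "count_list (p@q) 6 + count_list (p@q) 3 \<le> length (p@q)" by (rule cnt2_le) simp
      ultimately show False using nz lenpq unfolding k_def by simp
    qed
    have "count_list (a @ mm @ b) 4 = 1" using cR[of 4] cRv[of 4] c0[of 4] Z4 by (simp; arith)
    then have A0: "count_list (a @ mm @ b) 1 = count_list (a @ mm @ b) 5"
      "count_list (a @ mm @ b) 3 \<le> count_list (a @ mm @ b) 1" using J0 unfolding J_def by auto
    have "count_list (a @ p @ p @ mm @ q @ q @ b) 4 = 1" using cR[of 4] cRv[of 4] c2[of 4] Z4 by (simp; arith)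
    then have A2: "count_list (a @ p @ p @ mm @ q @ q @ b) 1 = count_list (a @ p @ p @ mm @ q @ q @ b) 5"
      "count_list (a @ p @ p @ mm @ q @ q @ b) 3 \<le> count_list (a @ p @ p @ mm @ q @ q @ b) 1"
      using J2 unfolding J_def by auto
    have eqs: "count_list p 1 + count_list q 1 = count_list p 5 + count_list q 5"
       "count_list p 1 + count_list q 1 = count_list p 3 + count_list q 3"
      using A0 A2 c0[of 1] c0[of 3] c0[of 5] c2[of 1] c2[of 3] c2[of 5]
        cR[of 1] cR[of 3] cR[of 5] cRv[of 1] cRv[of 3] cRv[of 5] by simp_all
    obtain c where cin: "c \<in> set (p @ q)" using w(3) by (cases "p @ q") auto
    then have "count_list (p @ q) c \<ge> 1" by (rule mem_cnt)
    then have cpos: "count_list p c + count_list q c \<ge> 1" by simp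
    then have "count_list R c \<ge> 1" using cR[of c] by simp
    then have "c \<in> {0,1,2,3,4,5,6}" using cRv[of c] by (auto split: if_splits)
    then have pos1: "count_list p 1 + count_list q 1 \<ge> 1"
      using cpos Z0 Z2 Z4 Z6 eqs by auto
    then have "1 \<in> set (p @ mm @ q)" using count_notin[of 1 p] count_notin[of 1 q] by auto
    moreover have "3 \<in> set (p @ mm @ q)" using pos1 eqs count_notin[of 3 p] count_notin[of 3 q] by auto
    moreover have "a @ (p @ mm @ q) @ b = (0 # replicate k 1) @ (4 # replicate k 5 @ [2]) @ (replicate k 3 @ [6])"
      using w(1) unfolding R_def yw_def by simp
    ultimately have "length (4 # replicate k 5 @ [2::nat]) < length (p @ mm @ q)"
      by (intro loc[of a "p @ mm @ q" b "0 # replicate k 1" "4 # replicate k 5 @ [2]" "replicate k 3 @ [6]" 1 3]) auto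
    then show False using w(2) unfolding k_def by simp
  qed
qed

end
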